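(* Let $X\subseteq\{0,1\}^n$ be a nonempty set, let $U\subseteq\mathbb{R}^{n+1}$ be a nonempty compact set, define $f(x):=\max_{(c_0,c)\in U}\, c^\top x+c_0$ for $x\in\mathbb{R}^n$, and let $P:=\operatorname{conv}(X)$. Then Algorithm SD (described in the context) terminates after a finite number of iterations, and the point $x^k$ it outputs is a minimizer of $f$ over $P$.
   Context: For a convex function $f$, $\partial f(x)$ denotes its subdifferential at $x$. For a convex set $C$ and $x\in C$, $\mathcal{N}_C(x)=\{d\in\mathbb{R}^n: d^\top(y-x)\le 0\ \forall y\in C\}$ is the normal cone of $C$ at $x$. Algorithm SD: pick any $\hat x^0\in X$ and set $V^1=\{\hat x^0\}$. For $k=1,2,\dots$: compute (by any method) $\alpha^k\in\mathbb{R}^{V^k}_+$ with $\sum_{v\in V^k}\alpha^k_v=1$, the point $x^k=\sum_{v\in V^k}\alpha^k_v v$, and a vector $c^k\in\partial f(x^k)\cap(-\mathcal{N}_{\operatorname{conv}(V^k)}(x^k))$; then compute a minimizer $\hat x^k$ of $\min_{x\in X}(c^k)^\top x$. If $(c^k)^\top\hat x^k\ge (c^k)^\top x^k$, stop and output $x^k$; otherwise set $V^{k+1}:=V^k\cup\{\hat x^k\}$ and continue. *)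

theory Defs
  imports "HOL-Analysis.Analysis"
begin

definition subdifferential :: "('a::real_inner \<Rightarrow> real) \<Rightarrow> 'a \<Rightarrow> 'a set" where
  "subdifferential f x = {g. \<forall>y. f y \<ge> f x + g \<bullet> (y - x)}"

definition normal_cone :: "'a::real_inner set \<Rightarrow> 'a \<Rightarrow> 'a set" where
  "normal_cone C x = {d. \<forall>y\<in>C. d \<bullet> (y - x) \<le> 0}"

definition SD_iter :: "('a::real_inner \<Rightarrow> real) \<Rightarrow> 'a set \<Rightarrow> 'a set \<Rightarrow> ('a \<Rightarrow> real)
    \<Rightarrow> 'a \<Rightarrow> 'a \<Rightarrow> 'a \<Rightarrow> bool" where
  "SD_iter f X V \<alpha> x c xh \<longleftrightarrow>
     (\<forall>v\<in>V. \<alpha> v \<ge> 0) \<and> (\<Sum>v\<in>V. \<alpha> v) = 1 \<and> x = (\<Sum>v\<in>V. \<alpha> v *\<^sub>R v) \<and>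
     c \<in> subdifferential f x \<and> - c \<in> normal_cone (convex hull V) x \<and>
     xh \<in> X \<and> (\<forall>y\<in>X. c \<bullet> xh \<le> c \<bullet> y)"

definition SD_stop :: "'a::real_inner \<Rightarrow> 'a \<Rightarrow> 'a \<Rightarrow> bool" where
  "SD_stop x c xh \<longleftrightarrow> c \<bullet> xh \<ge> c \<bullet> x"

end

theory Submission
  imports Defs
begin

lemma finX: "finite {v::real^'n. \<forall>i. v $ i = 0 \<or> v $ i = 1}"
proof -
  have "{v::real^'n. \<forall>i. v $ i = 0 \<or> v $ i = 1} \<subseteq> vec_lambda ` (PiE UNIV (\<lambda>_. {0,1}))"
  proof
    fix v :: "real^'n" assume "v \<in> {v. \<forall>i. v $ i = 0 \<or> v $ i = 1}"
    then have "(\<lambda>i. v $ i) \<in> PiE UNIV (\<lambda>_. {0,1})" by auto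
    moreover have "v = vec_lambda (\<lambda>i. v $ i)" by simp
    ultimately show "v \<in> vec_lambda ` (PiE UNIV (\<lambda>_. {0,1}))" by blast
  qed
  moreover have "finite (PiE (UNIV::'n set) (\<lambda>_. {0::real,1}))" by (intro finite_PiE) auto
  ultimately show ?thesis using finite_subset by blast
qed
theorem theorem1:
  fixes X :: "(real ^ 'n) set" and U :: "(real \<times> (real ^ 'n)) set"
    and f :: "real ^ 'n \<Rightarrow> real"
    and V :: "nat \<Rightarrow> (real ^ 'n) set" and \<alpha> :: "nat \<Rightarrow> real ^ 'n \<Rightarrow> real"
    and x c xh :: "nat \<Rightarrow> real ^ 'n"
  assumes X01: "\<forall>v\<in>X. \<forall>i. v $ i = 0 \<or> v $ i = 1"
    and Xne: "X \<noteq> {}"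
    and Ucomp: "compact U" and Une: "U \<noteq> {}"
    and f_def: "f = (\<lambda>y. SUP (c0, cc)\<in>U. cc \<bullet> y + c0)"
    and init: "xh 0 \<in> X" "V 1 = {xh 0}"
    and run: "\<And>k. k \<ge> 1 \<Longrightarrow> (\<forall>j\<in>{1..<k}. \<not> SD_stop (x j) (c j) (xh j)) \<Longrightarrow>
               SD_iter f X (V k) (\<alpha> k) (x k) (c k) (xh k) \<and>
               (\<not> SD_stop (x k) (c k) (xh k) \<longrightarrow> V (Suc k) = insert (xh k) (V k))"
  shows "\<exists>k\<ge>1. (\<forall>j\<in>{1..<k}. \<not> SD_stop (x j) (c j) (xh j)) \<and> SD_stop (x k) (c k) (xh k) \<and>
           x k \<in> convex hull X \<and> (\<forall>y\<in>convex hull X. f (x k) \<le> f y)"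
proof -
  let ?S = "\<lambda>j. SD_stop (x j) (c j) (xh j)"
  have finX: "finite X"
    using finite_subset[OF _ finX] X01 by blast
  have grow: "k \<ge> 1 \<Longrightarrow> (\<forall>j\<in>{1..<k}. \<not> ?S j) \<Longrightarrow> finite (V k) \<and> V k \<subseteq> X \<and> card (V k) = k" for k
  proof (induction k rule: nat_induct_at_least)
    case base then show ?case using init by simp
  next
    case (Suc k)
    have Pk: "\<forall>j\<in>{1..<k}. \<not> ?S j" and nk: "\<not> ?S k" using Suc.prems Suc.hyps by auto
    have IH: "finite (V k) \<and> V k \<subseteq> X \<and> card (V k) = k" using Suc.IH Pk by blast
    have it: "SD_iter f X (V k) (\<alpha> k) (x k) (c k) (xh k)" and VS: "V (Suc k) = insert (xh k) (V k)"
      using run[OF Suc.hyps Pk] nk by auto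
    have xhX: "xh k \<in> X" using it unfolding SD_iter_def by blast
    have nc: "- c k \<in> normal_cone (convex hull V k) (x k)" using it unfolding SD_iter_def by blast
    have "xh k \<notin> V k"
    proof
      assume "xh k \<in> V k"
      then have "xh k \<in> convex hull V k" by (simp add: hull_inc)
      with nc have "(- c k) \<bullet> (xh k - x k) \<le> 0" unfolding normal_cone_def by blast
      then have "c k \<bullet> xh k \<ge> c k \<bullet> x k" by (simp add: inner_diff_right)
      with nk show False unfolding SD_stop_def by simp
    qed
    then show ?case using IH VS xhX by simp
  qed
  have "\<exists>j\<ge>1. ?S j"
  proof (rule ccontr)
    assume "\<not> ?thesis"
    then have "\<forall>j\<in>{1..<card X + 1}. \<not> ?S j" by auto
    from grow[OF _ this] have "V (card X + 1) \<subseteq> X" "card (V (card X + 1)) = card X + 1" by auto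
    moreover have "card (V (card X + 1)) \<le> card X" using card_mono[OF finX] calculation(1) by blast
    ultimately show False by simp
  qed
  then obtain k where k: "k \<ge> 1 \<and> ?S k" and kmin: "\<And>j. j \<ge> 1 \<and> ?S j \<Longrightarrow> k \<le> j"
    using LeastI_ex[of "\<lambda>j. j \<ge> 1 \<and> ?S j"] Least_le[of "\<lambda>j. j \<ge> 1 \<and> ?S j"] by blast
  have Pk: "\<forall>j\<in>{1..<k}. \<not> ?S j" using kmin by fastforce
  have fin: "finite (V k)" and VX: "V k \<subseteq> X" using grow k Pk by auto
  have it: "SD_iter f X (V k) (\<alpha> k) (x k) (c k) (xh k)" using run k Pk by blast
  have xin: "x k \<in> convex hull V k"
    using it fin unfolding SD_iter_def by (auto simp: convex_hull_finite)
  have xinX: "x k \<in> convex hull X" using xin hull_mono[OF VX] by blast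
  have sub: "c k \<in> subdifferential f (x k)" and xhmin: "\<forall>y\<in>X. c k \<bullet> xh k \<le> c k \<bullet> y"
    using it unfolding SD_iter_def by auto
  have st: "c k \<bullet> xh k \<ge> c k \<bullet> x k" using k unfolding SD_stop_def by simp
  have "convex {y. c k \<bullet> x k \<le> c k \<bullet> y}"
    using convex_halfspace_ge[of "c k \<bullet> x k" "c k"] by simp
  moreover have "X \<subseteq> {y. c k \<bullet> x k \<le> c k \<bullet> y}" using xhmin st by force
  ultimately have hs: "convex hull X \<subseteq> {y. c k \<bullet> x k \<le> c k \<bullet> y}" by (simp add: hull_minimal)
  have "\<forall>y\<in>convex hull X. f (x k) \<le> f y"
  proof
    fix y assume "y \<in> convex hull X"
    then have "c k \<bullet> (y - x k) \<ge> 0" using hs by (auto simp: inner_diff_right)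
    moreover have "f y \<ge> f (x k) + c k \<bullet> (y - x k)" using sub unfolding subdifferential_def by blast
    ultimately show "f (x k) \<le> f y" by linarith
  qed
  then show ?thesis using k Pk xinX by blast
qed

end
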